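(* Suppose Assumptions A.1, A.2 and A.3 (stated in the context) hold. Then the constraint matrix of the linear recourse polyhedron $P$ is totally unimodular. Every entry of this matrix lies in $\{0,\pm1\}$, and every determinant of one of its square submatrices lies in $\{0,\pm1\}$.
   Context: Fix $d \ge 1$. The decision variables are $\mathbf{x}=(x_1,\dots,x_d)$, representing an individual, and $\mathbf{a}=(a_1,\dots,a_d)$, representing an action, with $(\mathbf{x},\mathbf{a})\in\mathbb{R}^{2d}$. For a feature index $j\in[d]$, a *feature term* $v_j$ denotes one of $x_j$, $a_j$ or $x_j+a_j$. The choice may differ from constraint to constraint. A *linear recourse constraint* is a linear inequality of one of the following three types. (i) An *integer bound constraint* $L_j\le v_j$ or $v_j\le U_j$, where $L_j,U_j\in\mathbb{Z}$. (ii) A *$K$-hot constraint* $\sum_{j\in J_i} s_{ij}\, v_j\le K_i$, where $J_i\subseteq[d]$, each $s_{ij}\in\{+1,-1\}$, and $K_i\in\mathbb{Z}$. (iii) A *(unit) directional linkage constraint* $v_j\le v_k$, where $j,k\in[d]$. The feature space $\mathcal{X}$, the region of interest $\mathcal{R}$, the box $B(\mathbf{u},\mathbf{l})=\{\mathbf{x}:\mathbf{l}\le\mathbf{x}\le\mathbf{u}\}$ with $\mathbf{u},\mathbf{l}\in\mathbb{Z}^d$, and the action set $A(\mathbf{x})$ are all assumed to be described by finitely many linear recourse constraints. The *linear recourse polyhedron* $P\subseteq\mathbb{R}^{2d}$ is the set of all $(\mathbf{x},\mathbf{a})$ satisfying all of these constraints, namely $\mathbf{x}+\mathbf{a}\in\mathcal{X}$,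 $\mathbf{x}\in\mathcal{R}$, $\mathbf{x}\in B(\mathbf{u},\mathbf{l})$ and $\mathbf{a}\in A(\mathbf{x})$. Let $\mathcal{J}=\{J_i\}$ be the family of index sets of the $K$-hot constraints. The *implication graph* is the undirected graph with one node $n_j$ for each $j\in[d]$ and an edge between $n_j$ and $n_k$ whenever some directional linkage constraint acts on features $j$ and $k$. Assumption A.1: no feature index appears in more than one $K$-hot constraint, i.e. $J_i\cap J_k=\emptyset$ for all distinct $J_i,J_k\in\mathcal{J}$. Assumption A.2: each connected component of the implication graph contains at most one node $n_j$ with $j\in\bigcup_{J_i\in\mathcal{J}}J_i$. Assumption A.3: the implication graph is acyclic. *)

theory Defs
  imports "Jordan_Normal_Form.DL_Submatrix" "Jordan_Normal_Form.Determinant"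
begin

text \<open>Features are indexed by 0, ..., d-1 (this is the index set [d]).
  The 2d decision variables (x, a) are the columns 0, ..., 2d-1 of the constraint
  matrix: column j is x_j and column d+j is a_j.\<close>

text \<open>Choice of a feature term v_j: x_j, a_j or x_j + a_j.\<close>
datatype term_kind = TX | TA | TXA

datatype recourse_constr =
    LowerBound nat term_kind int
      \<comment> \<open>LowerBound j t L :  L <= v_j  (v_j of kind t)\<close>
  | UpperBound nat term_kind int
      \<comment> \<open>UpperBound j t U :  v_j <= U\<close>
  | KHot "nat set" "nat \<Rightarrow> int" "nat \<Rightarrow> term_kind" int
      \<comment> \<open>KHot J s t K :  sum over j in J of s j * v_j <= K, v_j of kind t j\<close>
  | Link nat term_kind nat term_kind
      \<comment> \<open>Link j tj k tk :  v_j <= v_k, v_j of kind tj and v_k of kind tk\<close>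

definition term_coef :: "nat \<Rightarrow> nat \<Rightarrow> term_kind \<Rightarrow> nat \<Rightarrow> int" where
  "term_coef d j t c =
     (if c = j \<and> t \<noteq> TA then 1 else 0) + (if c = d + j \<and> t \<noteq> TX then 1 else 0)"

text \<open>Coefficient row of a constraint, written in the form  row * (x,a) <= rhs.\<close>
fun constr_row :: "nat \<Rightarrow> recourse_constr \<Rightarrow> nat \<Rightarrow> int" where
  "constr_row d (LowerBound j t L) c = - term_coef d j t c"
| "constr_row d (UpperBound j t U) c = term_coef d j t c"
| "constr_row d (KHot J s t K) c = (\<Sum>j\<in>J. s j * term_coef d j (t j) c)"
| "constr_row d (Link j tj k tk) c = term_coef d j tj c - term_coef d k tk c"

fun constr_rhs :: "recourse_constr \<Rightarrow> int" where
  "constr_rhs (LowerBound j t L) = - L"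
| "constr_rhs (UpperBound j t U) = U"
| "constr_rhs (KHot J s t K) = K"
| "constr_rhs (Link j tj k tk) = 0"

fun wf_constr :: "nat \<Rightarrow> recourse_constr \<Rightarrow> bool" where
  "wf_constr d (LowerBound j t L) = (j < d)"
| "wf_constr d (UpperBound j t U) = (j < d)"
| "wf_constr d (KHot J s t K) = (J \<subseteq> {..<d} \<and> (\<forall>j\<in>J. s j \<in> {1, -1}))"
| "wf_constr d (Link j tj k tk) = (j < d \<and> k < d)"

text \<open>The linear recourse polyhedron described by a finite list of constraints
  (the concatenation of the descriptions of X (applied to x+a), R, B(u,l) and A(x)).
  A point (x,a) is given by its 2d coordinates z, with x_j = z j, a_j = z (d+j).\<close>
definition recourse_polyhedron :: "nat \<Rightarrow> recourse_constr list \<Rightarrow> (nat \<Rightarrow> real) set" where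
  "recourse_polyhedron d cs =
     {z. (\<forall>c\<ge>2*d. z c = 0) \<and>
         (\<forall>con\<in>set cs. (\<Sum>c<2*d. of_int (constr_row d con c) * z c) \<le> of_int (constr_rhs con))}"

definition constraint_matrix :: "nat \<Rightarrow> recourse_constr list \<Rightarrow> int mat" where
  "constraint_matrix d cs = mat (length cs) (2*d) (\<lambda>(i,c). constr_row d (cs ! i) c)"

definition totally_unimodular :: "int mat \<Rightarrow> bool" where
  "totally_unimodular A \<longleftrightarrow>
     (\<forall>I J. dim_row (submatrix A I J) = dim_col (submatrix A I J) \<longrightarrow>
            det (submatrix A I J) \<in> {-1, 0, 1})"

definition khot_indices :: "recourse_constr list \<Rightarrow> nat set" where
  "khot_indices cs = (\<Union>con\<in>set cs. case con of KHot J s t K \<Rightarrow> J | _ \<Rightarrow> {})"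

definition assumption_A1 :: "recourse_constr list \<Rightarrow> bool" where
  "assumption_A1 cs \<longleftrightarrow>
     (\<forall>p<length cs. \<forall>q<length cs. p \<noteq> q \<longrightarrow>
        (case (cs ! p, cs ! q) of
           (KHot J1 s1 t1 K1, KHot J2 s2 t2 K2) \<Rightarrow> J1 \<inter> J2 = {}
         | _ \<Rightarrow> True))"

text \<open>Constraint number p is a directional linkage constraint acting on features j and k
  (an edge of the implication graph between n_j and n_k; one edge per linkage constraint).\<close>
definition link_edge :: "recourse_constr list \<Rightarrow> nat \<Rightarrow> nat \<Rightarrow> nat \<Rightarrow> bool" where
  "link_edge cs p j k \<longleftrightarrow> p < length cs \<and>
     (\<exists>tj tk. cs ! p = Link j tj k tk \<or> cs ! p = Link k tk j tj)"

definition impl_adj :: "recourse_constr list \<Rightarrow> nat \<Rightarrow> nat \<Rightarrow> bool" where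
  "impl_adj cs j k \<longleftrightarrow> (\<exists>p. link_edge cs p j k)"

definition impl_connected :: "recourse_constr list \<Rightarrow> nat \<Rightarrow> nat \<Rightarrow> bool" where
  "impl_connected cs = (impl_adj cs)\<^sup>*\<^sup>*"

definition assumption_A2 :: "recourse_constr list \<Rightarrow> bool" where
  "assumption_A2 cs \<longleftrightarrow>
     (\<forall>j\<in>khot_indices cs. \<forall>k\<in>khot_indices cs. impl_connected cs j k \<longrightarrow> j = k)"

text \<open>A cycle in the implication graph: a nonempty list of pairwise distinct edges es
  and vertices vs = [v_0, ..., v_m] with edge es!i joining v_i and v_(i+1),
  v_m = v_0 and v_0, ..., v_(m-1) pairwise distinct (loops and parallel edges are cycles).\<close>
definition impl_cycle :: "recourse_constr list \<Rightarrow> nat list \<Rightarrow> nat list \<Rightarrow> bool" where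
  "impl_cycle cs es vs \<longleftrightarrow>
     es \<noteq> [] \<and> distinct es \<and> length vs = length es + 1 \<and>
     (\<forall>i<length es. link_edge cs (es ! i) (vs ! i) (vs ! Suc i)) \<and>
     hd vs = last vs \<and> distinct (tl vs)"

definition assumption_A3 :: "recourse_constr list \<Rightarrow> bool" where
  "assumption_A3 cs \<longleftrightarrow> \<not> (\<exists>es vs. impl_cycle cs es vs)"

end

theory Submission
  imports Defs
begin

definition NM :: "nat \<Rightarrow> (nat \<Rightarrow> int) \<Rightarrow> (nat \<Rightarrow> nat set) \<Rightarrow> (nat \<Rightarrow> nat set) \<Rightarrow> int mat" where
  "NM k \<sigma> U W = mat k k (\<lambda>(r,c). \<sigma> c * ((if c \<in> U r then 1 else 0) - (if c \<in> W r then 1 else 0)))"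

definition goodfam :: "nat \<Rightarrow> (nat \<Rightarrow> nat) \<Rightarrow> nat set set \<Rightarrow> bool" where
  "goodfam k h F \<longleftrightarrow> (\<forall>A\<in>F. \<forall>B\<in>F. \<forall>e<k. e \<in> A \<longrightarrow> e \<in> B \<longrightarrow>
      (\<forall>f<k. h f \<le> h e \<longrightarrow> (f \<in> A \<longleftrightarrow> f \<in> B)))"

lemma NM_carrier: "NM k \<sigma> U W \<in> carrier_mat k k" by (simp add: NM_def)

lemma NM_index: "r < k \<Longrightarrow> c < k \<Longrightarrow> NM k \<sigma> U W $$ (r,c) =
   \<sigma> c * ((if c \<in> U r then 1 else 0) - (if c \<in> W r then 1 else 0))"
  by (simp add: NM_def)

lemma NM_swap:
  assumes "r < k"
  shows "det (NM k \<sigma> (U(r:=W r)) (W(r:=U r))) = - det (NM k \<sigma> U W)"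
proof -
  have "NM k \<sigma> (U(r:=W r)) (W(r:=U r)) = multrow r (-1) (NM k \<sigma> U W)"
    by (rule eq_matI) (auto simp: NM_def mat_multrow_def)
  then show ?thesis using det_multrow[OF assms NM_carrier] by simp
qed

lemma NM_add:
  assumes "r < k" "r0 < k" "r \<noteq> r0" "\<forall>c<k. c \<in> U r \<longleftrightarrow> c \<in> U r0"
  shows "det (NM k \<sigma> (U(r:=W r0)) W) = det (NM k \<sigma> U W)"
proof -
  have "NM k \<sigma> (U(r:=W r0)) W = addrow (-1) r r0 (NM k \<sigma> U W)"
    by (rule eq_matI) (use assms in \<open>auto simp: NM_def mat_addrow_def algebra_simps\<close>)
  then show ?thesis using det_addrow[OF assms(2) assms(3) NM_carrier] by simp
qed

lemma NM_delete:
  assumes "r0 < Suc k" "e < Suc k"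
  shows "mat_delete (NM (Suc k) \<sigma> U W) r0 e =
     NM k (\<lambda>c. \<sigma> (insert_index e c)) (\<lambda>r. {c. insert_index e c \<in> U (insert_index r0 r)})
        (\<lambda>r. {c. insert_index e c \<in> W (insert_index r0 r)})"
proof (rule eq_matI)
  fix i j assume ij: "i < dim_row (NM k (\<lambda>c. \<sigma> (insert_index e c)) (\<lambda>r. {c. insert_index e c \<in> U (insert_index r0 r)})
        (\<lambda>r. {c. insert_index e c \<in> W (insert_index r0 r)}))"
     "j < dim_col (NM k (\<lambda>c. \<sigma> (insert_index e c)) (\<lambda>r. {c. insert_index e c \<in> U (insert_index r0 r)})
        (\<lambda>r. {c. insert_index e c \<in> W (insert_index r0 r)}))"
  then have ij': "i < k" "j < k" by (simp_all add: NM_def)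
  have a: "(if i < r0 then i else Suc i) = insert_index r0 i" "(if j < e then j else Suc j) = insert_index e j"
    by (simp_all add: insert_index_def)
  have b: "insert_index r0 i < Suc k" "insert_index e j < Suc k" using ij' by (simp_all add: insert_index_def)
  show "mat_delete (NM (Suc k) \<sigma> U W) r0 e $$ (i, j) = NM k (\<lambda>c. \<sigma> (insert_index e c)) (\<lambda>r. {c. insert_index e c \<in> U (insert_index r0 r)})
        (\<lambda>r. {c. insert_index e c \<in> W (insert_index r0 r)}) $$ (i, j)"
    using mat_delete_index[OF NM_carrier assms ij', of \<sigma> U W, symmetric] ij' b
    by (simp add: NM_index)
qed (simp_all add: NM_def)

lemma NM_laplace:
  assumes "r0 < k" "e < k" "\<forall>i<k. i \<noteq> r0 \<longrightarrow> NM k \<sigma> U W $$ (i,e) = 0"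
  shows "det (NM k \<sigma> U W) = NM k \<sigma> U W $$ (r0,e) * cofactor (NM k \<sigma> U W) r0 e"
proof -
  have "det (NM k \<sigma> U W) = (\<Sum>i<k. NM k \<sigma> U W $$ (i,e) * cofactor (NM k \<sigma> U W) i e)"
    by (rule laplace_expansion_column[OF NM_carrier assms(2)])
  also have "\<dots> = (\<Sum>i\<in>{r0}. NM k \<sigma> U W $$ (i,e) * cofactor (NM k \<sigma> U W) i e)"
    by (rule sum.mono_neutral_right) (use assms in auto)
  finally show ?thesis by simp
qed

lemma goodfam_delete:
  assumes "goodfam (Suc k) h F" "e < Suc k"
  shows "goodfam k (\<lambda>c. h (insert_index e c)) ((\<lambda>A. {c. insert_index e c \<in> A}) ` F)"
proof -
  have ii: "c < k \<Longrightarrow> insert_index e c < Suc k" for c by (simp add: insert_index_def)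
  show ?thesis unfolding goodfam_def
  proof (intro ballI allI impI)
    fix A' B' e' f
    assume A': "A' \<in> (\<lambda>A. {c. insert_index e c \<in> A}) ` F" and B': "B' \<in> (\<lambda>A. {c. insert_index e c \<in> A}) ` F"
      and e': "e' < k" "e' \<in> A'" "e' \<in> B'" and f: "f < k" "h (insert_index e f) \<le> h (insert_index e e')"
    obtain A B where AB: "A \<in> F" "B \<in> F" "A' = {c. insert_index e c \<in> A}" "B' = {c. insert_index e c \<in> B}"
      using A' B' by blast
    have "insert_index e e' \<in> A" "insert_index e e' \<in> B" using e' AB by auto
    then have "insert_index e f \<in> A \<longleftrightarrow> insert_index e f \<in> B"
      using assms(1)[unfolded goodfam_def, rule_format, OF AB(1) AB(2) ii[OF e'(1)] _ _ ii[OF f(1)] f(2)]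
      by blast
    then show "f \<in> A' \<longleftrightarrow> f \<in> B'" using AB by blast
  qed
qed

abbreviation S1 :: "int set" where "S1 \<equiv> {-1,0,1}"

lemma S1_neg: "x \<in> S1 \<Longrightarrow> - x \<in> S1" by auto

lemma S1_mult: "a \<in> {-1,1} \<Longrightarrow> x \<in> S1 \<Longrightarrow> a * x \<in> S1" by auto

lemma main_det:
  "\<And>\<sigma> h F U W. (\<forall>c<k. \<sigma> c \<in> {-1,1}) \<Longrightarrow> goodfam k h F \<Longrightarrow> (\<forall>r<k. U r \<in> F \<and> W r \<in> F)
   \<Longrightarrow> det (NM k \<sigma> U W) \<in> S1"
proof (induction k)
  case 0
  then show ?case by (simp add: NM_def det_def)
next
  case (Suc k)
  note IH = Suc.IH
  fix \<sigma> :: "nat \<Rightarrow> int" and h :: "nat \<Rightarrow> nat" and F U W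
  assume sig: "\<forall>c<Suc k. \<sigma> c \<in> {-1,1}" and gf: "goodfam (Suc k) h F"
    and UW: "\<forall>r<Suc k. U r \<in> F \<and> W r \<in> F"
  obtain e where e: "e < Suc k" "\<forall>f<Suc k. h f \<le> h e"
  proof -
    have "finite (h ` {..<Suc k})" "h ` {..<Suc k} \<noteq> {}" by auto
    then have "Max (h ` {..<Suc k}) \<in> h ` {..<Suc k}" by (rule Max_in)
    then obtain e where "e < Suc k" "h e = Max (h ` {..<Suc k})" by auto
    then show ?thesis using that by auto
  qed
  have base: "det (NM (Suc k) \<sigma> U' W') \<in> S1"
    if r0: "r0 < Suc k" and UW': "\<forall>r<Suc k. U' r \<in> F \<and> W' r \<in> F"
      and z: "\<forall>i<Suc k. i \<noteq> r0 \<longrightarrow> NM (Suc k) \<sigma> U' W' $$ (i,e) = 0" for r0 U' W'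
  proof -
    have "det (NM (Suc k) \<sigma> U' W') = NM (Suc k) \<sigma> U' W' $$ (r0,e) * cofactor (NM (Suc k) \<sigma> U' W') r0 e"
      by (rule NM_laplace[OF r0 e(1) z])
    moreover have "NM (Suc k) \<sigma> U' W' $$ (r0,e) \<in> S1"
      using sig e(1) r0 by (auto simp: NM_index)
    moreover have "cofactor (NM (Suc k) \<sigma> U' W') r0 e \<in> S1"
    proof -
      have ii: "c < k \<Longrightarrow> insert_index e c < Suc k" "c < k \<Longrightarrow> insert_index r0 c < Suc k" for c
        by (auto simp add: insert_index_def)
      have "det (NM k (\<lambda>c. \<sigma> (insert_index e c)) (\<lambda>r. {c. insert_index e c \<in> U' (insert_index r0 r)})
        (\<lambda>r. {c. insert_index e c \<in> W' (insert_index r0 r)})) \<in> S1"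
        apply (rule IH[OF _ goodfam_delete[OF gf e(1)]])
        using sig UW' ii by auto
      then show ?thesis unfolding cofactor_def NM_delete[OF r0 e(1)]
        by (cases "even (r0+e)") auto
    qed
    ultimately show ?thesis by auto
  qed
  let ?nz = "\<lambda>U W r. (e \<in> U r) \<noteq> (e \<in> W r)"
  have inner: "\<And>U' W'. card {r. r < Suc k \<and> r \<noteq> r0 \<and> ?nz U' W' r} = n \<Longrightarrow>
      (\<forall>r<Suc k. U' r \<in> F \<and> W' r \<in> F) \<Longrightarrow> e \<in> U' r0 \<Longrightarrow> e \<notin> W' r0 \<Longrightarrow>
      det (NM (Suc k) \<sigma> U' W') \<in> S1" if r0: "r0 < Suc k" for r0 n
  proof (induction n)
    case 0
    fix U' W' assume c: "card {r. r < Suc k \<and> r \<noteq> r0 \<and> ?nz U' W' r} = 0"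
      and UW': "\<forall>r<Suc k. U' r \<in> F \<and> W' r \<in> F"
    have "{r. r < Suc k \<and> r \<noteq> r0 \<and> ?nz U' W' r} = {}" using c by simp
    then have "\<forall>i<Suc k. i \<noteq> r0 \<longrightarrow> NM (Suc k) \<sigma> U' W' $$ (i,e) = 0"
      using e(1) by (auto simp: NM_index)
    then show "det (NM (Suc k) \<sigma> U' W') \<in> S1" by (rule base[OF r0 UW'])
  next
    case (Suc n)
    fix U' W' assume c: "card {r. r < Suc k \<and> r \<noteq> r0 \<and> ?nz U' W' r} = Suc n"
      and UW': "\<forall>r<Suc k. U' r \<in> F \<and> W' r \<in> F" and eU: "e \<in> U' r0" and eW: "e \<notin> W' r0"
    have "{r. r < Suc k \<and> r \<noteq> r0 \<and> ?nz U' W' r} \<noteq> {}"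
    proof
      assume "{r. r < Suc k \<and> r \<noteq> r0 \<and> ?nz U' W' r} = {}"
      then have "card {r. r < Suc k \<and> r \<noteq> r0 \<and> ?nz U' W' r} = 0" by (simp only: card.empty)
      then show False using c by (metis Zero_not_Suc)
    qed
    then obtain r1 where r1: "r1 < Suc k" "r1 \<noteq> r0" "?nz U' W' r1"
      by blast
    obtain U1 W1 where n1: "det (NM (Suc k) \<sigma> U1 W1) \<in> S1 \<Longrightarrow> det (NM (Suc k) \<sigma> U' W') \<in> S1"
      and U1: "e \<in> U1 r1" "e \<notin> W1 r1" and UW1: "\<forall>r<Suc k. U1 r \<in> F \<and> W1 r \<in> F"
      and same: "\<forall>r. r \<noteq> r1 \<longrightarrow> U1 r = U' r \<and> W1 r = W' r"
      and samenz: "\<forall>r. ?nz U1 W1 r = ?nz U' W' r"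
    proof (cases "e \<in> U' r1")
      case True
      show ?thesis
        apply (rule that[of U' W'])
        subgoal by assumption
        subgoal using True by assumption
        subgoal using True r1(3) by blast
        subgoal using UW' by blast
        subgoal by blast
        subgoal by blast
        done
    next
      case False
      have "det (NM (Suc k) \<sigma> (U'(r1:=W' r1)) (W'(r1:=U' r1))) = - det (NM (Suc k) \<sigma> U' W')"
        by (rule NM_swap[OF r1(1)])
      note sw = this
      show ?thesis
        apply (rule that[of "U'(r1:=W' r1)" "W'(r1:=U' r1)"])
        subgoal using sw by auto
        subgoal using False r1 by auto
        subgoal using False r1 by auto
        subgoal using UW' r1 by auto
        subgoal by auto
        subgoal by auto
        done
    qed
    have eqU: "\<forall>c<Suc k. c \<in> U1 r1 \<longleftrightarrow> c \<in> U1 r0"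
    proof -
      have F1: "U1 r1 \<in> F" "U1 r0 \<in> F" using UW1 r1(1) r0 by auto
      have e0: "e \<in> U1 r0" using same eU r1(2) by metis
      have "\<forall>f<Suc k. h f \<le> h e \<longrightarrow> (f \<in> U1 r1 \<longleftrightarrow> f \<in> U1 r0)"
        using gf[unfolded goodfam_def, rule_format, OF F1 e(1) U1(1) e0] by blast
      then show ?thesis using e(2) by blast
    qed
    have d2: "det (NM (Suc k) \<sigma> (U1(r1:=W1 r0)) W1) = det (NM (Suc k) \<sigma> U1 W1)"
      by (rule NM_add[OF r1(1) r0 r1(2) eqU])
    have set_eq: "{r. r < Suc k \<and> r \<noteq> r0 \<and> ?nz (U1(r1:=W1 r0)) W1 r}
        = {r. r < Suc k \<and> r \<noteq> r0 \<and> ?nz U' W' r} - {r1}"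
    proof -
      have "e \<notin> W1 r0" using same eW r1(2) by metis
      then show ?thesis using samenz U1 by auto
    qed
    have "card ({r. r < Suc k \<and> r \<noteq> r0 \<and> ?nz U' W' r} - {r1}) = n"
      using c r1 by simp
    then have "det (NM (Suc k) \<sigma> (U1(r1:=W1 r0)) W1) \<in> S1"
      apply (intro Suc.IH)
      subgoal using set_eq by simp
      subgoal using UW1 r0 by auto
      subgoal using same eU r1(2) by simp
      subgoal using same eW r1(2) by simp
      done
    then show "det (NM (Suc k) \<sigma> U' W') \<in> S1" using d2 n1 by simp
  qed
  show "det (NM (Suc k) \<sigma> U W) \<in> S1"
  proof (cases "\<exists>r0<Suc k. ?nz U W r0")
    case False
    have z: "\<forall>i<Suc k. i \<noteq> 0 \<longrightarrow> NM (Suc k) \<sigma> U W $$ (i,e) = 0"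
    proof (intro allI impI)
      fix i assume "i < Suc k" "i \<noteq> 0"
      then have "\<not> ?nz U W i" using False by blast
      then show "NM (Suc k) \<sigma> U W $$ (i,e) = 0" using e(1) \<open>i < Suc k\<close> by (simp add: NM_index)
    qed
    have z0: "NM (Suc k) \<sigma> U W $$ (0,e) = 0"
    proof -
      have "\<not> ?nz U W 0" using False by blast
      then show ?thesis using e(1) by (simp add: NM_index)
    qed
    have "det (NM (Suc k) \<sigma> U W) = NM (Suc k) \<sigma> U W $$ (0,e) * cofactor (NM (Suc k) \<sigma> U W) 0 e"
      by (rule NM_laplace[OF _ e(1) z]) simp
    then show ?thesis using z0 by simp
  next
    case True
    then obtain r0 where r0: "r0 < Suc k" "?nz U W r0" by blast
    show ?thesis
    proof (cases "e \<in> U r0")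
      case True
      have "e \<notin> W r0" using True r0(2) by blast
      then show ?thesis using inner[OF r0(1) refl UW True] by blast
    next
      case False
      have eW: "e \<in> W r0" using False r0(2) by blast
      have UW2: "\<forall>r<Suc k. (U(r0:=W r0)) r \<in> F \<and> (W(r0:=U r0)) r \<in> F" using UW r0(1) by auto
      have "det (NM (Suc k) \<sigma> (U(r0:=W r0)) (W(r0:=U r0))) \<in> S1"
        by (rule inner[OF r0(1) refl UW2]) (use False eW in auto)
      then show ?thesis using NM_swap[OF r0(1), of \<sigma> U W] by auto
    qed
  qed
qed

locale RP =
  fixes d :: nat and cs :: "recourse_constr list"
  assumes d1: "d \<ge> 1" and wf: "\<forall>con\<in>set cs. wf_constr d con"
    and A1: "assumption_A1 cs" and A2: "assumption_A2 cs" and A3: "assumption_A3 cs"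
begin

lemma link_sym: "link_edge cs p j k \<Longrightarrow> link_edge cs p k j"
  unfolding link_edge_def by blast

lemma link_ends: "link_edge cs p a b \<Longrightarrow> link_edge cs p a' b' \<Longrightarrow> (a = a' \<and> b = b') \<or> (a = b' \<and> b = a')"
  unfolding link_edge_def by auto

lemma link_lt: assumes "link_edge cs p a b" shows "a < d \<and> b < d"
proof -
  obtain ta tb where p: "p < length cs" "cs!p = Link a ta b tb \<or> cs!p = Link b tb a ta"
    using assms unfolding link_edge_def by blast
  have "cs!p \<in> set cs" using p(1) by simp
  then have "wf_constr d (cs!p)" using wf by blast
  then show ?thesis using p(2) by auto
qed

lemma cyc_false:
  assumes "1 \<le> L" "f 0 = f L" "inj_on f {1..L}" "inj_on g {..<L}"
    "\<forall>i<L. link_edge cs (g i) (f i) (f (Suc i))"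
  shows False
proof -
  have "impl_cycle cs (map g [0..<L]) (map f [0..<Suc L])"
    unfolding impl_cycle_def
  proof (intro conjI)
    show "map g [0..<L] \<noteq> []" using assms(1) by simp
    show "distinct (map g [0..<L])" using assms(4) by (simp add: distinct_map lessThan_atLeast0)
    show "length (map f [0..<Suc L]) = length (map g [0..<L]) + 1" by simp
    show "\<forall>i<length (map g [0..<L]). link_edge cs (map g [0..<L] ! i) (map f [0..<Suc L] ! i) (map f [0..<Suc L] ! Suc i)"
      using assms(5) by (simp del: upt_Suc)
    show "hd (map f [0..<Suc L]) = last (map f [0..<Suc L])"
      using assms(2) by (simp add: hd_map last_map del: upt_Suc)
    have "tl (map f [0..<Suc L]) = map f [1..<Suc L]" by (simp add: map_tl[symmetric] tl_upt del: upt_Suc)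
    moreover have "set [1..<Suc L] = {1..L}" by auto
    ultimately show "distinct (tl (map f [0..<Suc L]))" using assms(3) by (simp add: distinct_map del: upt_Suc)
  qed
  then show False using A3 unfolding assumption_A3_def by blast
qed

lemma no_loop: "\<not> link_edge cs p j j"
proof
  assume "link_edge cs p j j"
  then show False
    by (intro cyc_false[of 1 "\<lambda>_. j" "\<lambda>_. p"]) (auto simp: inj_on_def)
qed

lemma link_adj: "link_edge cs p j k \<Longrightarrow> impl_adj cs j k"
  unfolding impl_adj_def by blast

lemma adj_sym: "impl_adj cs j k \<Longrightarrow> impl_adj cs k j"
  unfolding impl_adj_def using link_sym by blast

lemma conn_refl: "impl_connected cs j j"
  unfolding impl_connected_def by simp

lemma conn_sym: "impl_connected cs j k \<Longrightarrow> impl_connected cs k j"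
  unfolding impl_connected_def
proof (induction rule: rtranclp_induct)
  case base then show ?case by simp
next
  case (step y z)
  then show ?case using adj_sym by (meson converse_rtranclp_into_rtranclp)
qed

lemma conn_trans: "impl_connected cs j k \<Longrightarrow> impl_connected cs k l \<Longrightarrow> impl_connected cs j l"
  unfolding impl_connected_def by simp

lemma adj_conn: "impl_adj cs j k \<Longrightarrow> impl_connected cs j k"
  unfolding impl_connected_def by simp

definition rt :: "nat \<Rightarrow> nat" where
  "rt j = (if \<exists>k\<in>khot_indices cs. impl_connected cs j k
     then (THE k. k \<in> khot_indices cs \<and> impl_connected cs j k) else (LEAST k. impl_connected cs j k))"

lemma khot_unique: "k \<in> khot_indices cs \<Longrightarrow> impl_connected cs j k \<Longrightarrow>
   k' \<in> khot_indices cs \<Longrightarrow> impl_connected cs j k' \<Longrightarrow> k = k'"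
  using A2 conn_sym conn_trans unfolding assumption_A2_def by blast

lemma rt_conn: "impl_connected cs j (rt j)"
proof (cases "\<exists>k\<in>khot_indices cs. impl_connected cs j k")
  case True
  then obtain k where k: "k \<in> khot_indices cs" "impl_connected cs j k" by blast
  have "(THE k. k \<in> khot_indices cs \<and> impl_connected cs j k) = k"
    by (rule the_equality) (use k khot_unique in blast)+
  then show ?thesis using True k unfolding rt_def by simp
next
  case False
  then show ?thesis unfolding rt_def using LeastI[of "impl_connected cs j" j] conn_refl by simp
qed

lemma rt_eq: assumes "impl_connected cs j k" shows "rt j = rt k"
proof -
  have "\<And>x. impl_connected cs j x = impl_connected cs k x"
    using assms conn_sym conn_trans by blast
  then have "impl_connected cs j = impl_connected cs k" by blast
  then show ?thesis unfolding rt_def by simp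
qed

lemma rt_khot: assumes "j \<in> khot_indices cs" shows "rt j = j"
proof -
  have "(THE k. k \<in> khot_indices cs \<and> impl_connected cs j k) = j"
    by (rule the_equality) (use assms conn_refl khot_unique in blast)+
  then show ?thesis using assms conn_refl unfolding rt_def by auto
qed

definition dist :: "nat \<Rightarrow> nat" where
  "dist j = (LEAST n. (impl_adj cs ^^ n) j (rt j))"

lemma dist_path: "(impl_adj cs ^^ dist j) j (rt j)"
proof -
  have "\<exists>n. (impl_adj cs ^^ n) j (rt j)"
    using rt_conn[of j] unfolding impl_connected_def rtranclp_power by blast
  then show ?thesis unfolding dist_def by (rule LeastI_ex)
qed

lemma dist_le: "(impl_adj cs ^^ n) j (rt j) \<Longrightarrow> dist j \<le> n"
  unfolding dist_def by (rule Least_le)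

lemma dist0: "dist j = 0 \<longleftrightarrow> rt j = j"
proof
  assume "dist j = 0"
  then show "rt j = j" using dist_path[of j] by simp
next
  assume "rt j = j"
  then have "(impl_adj cs ^^ 0) j (rt j)" by simp
  then show "dist j = 0" using dist_le by fastforce
qed

lemma link_rt: "link_edge cs p j k \<Longrightarrow> rt j = rt k"
  using rt_eq adj_conn link_adj by blast

lemma dist_tri: assumes "link_edge cs p j k" shows "dist j \<le> Suc (dist k)"
proof -
  have "(impl_adj cs ^^ Suc (dist k)) j (rt k)"
    using relpowp_Suc_I2[OF link_adj[OF assms] dist_path[of k]] .
  then show ?thesis using link_rt[OF assms] dist_le by metis
qed

lemma dist_suc: assumes "dist j = Suc n" shows "\<exists>p k. link_edge cs p j k \<and> dist k = n"
proof -
  have "(impl_adj cs ^^ Suc n) j (rt j)" using dist_path[of j] assms by simp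
  then obtain y where y: "impl_adj cs j y" "(impl_adj cs ^^ n) y (rt j)" by (rule relpowp_Suc_E2)
  obtain p where p: "link_edge cs p j y" using y(1) unfolding impl_adj_def by blast
  have "rt y = rt j" using link_rt[OF p] by simp
  then have "dist y \<le> n" using dist_le y(2) by metis
  moreover have "dist j \<le> Suc (dist y)" by (rule dist_tri[OF p])
  ultimately show ?thesis using p assms by auto
qed

definition par :: "nat \<Rightarrow> nat \<times> nat" where
  "par j = (SOME pk. link_edge cs (fst pk) j (snd pk) \<and> Suc (dist (snd pk)) = dist j)"

definition pe :: "nat \<Rightarrow> nat" where "pe j = fst (par j)"
definition pv :: "nat \<Rightarrow> nat" where "pv j = snd (par j)"

lemma par_prop: assumes "0 < dist j"
  shows "link_edge cs (pe j) j (pv j) \<and> Suc (dist (pv j)) = dist j"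
proof -
  obtain n where n: "dist j = Suc n" using assms by (cases "dist j") auto
  then obtain p k where "link_edge cs p j k" "dist k = n" using dist_suc by blast
  then have "\<exists>pk. link_edge cs (fst pk) j (snd pk) \<and> Suc (dist (snd pk)) = dist j"
    using n by (intro exI[of _ "(p,k)"]) simp
  then show ?thesis unfolding pe_def pv_def par_def by (rule someI_ex)
qed

definition dv :: "nat \<Rightarrow> nat \<Rightarrow> nat" where "dv j i = (pv ^^ i) j"
definition de :: "nat \<Rightarrow> nat \<Rightarrow> nat" where "de j i = pe (dv j i)"

lemma dv_0[simp]: "dv j 0 = j" by (simp add: dv_def)
lemma dv_Suc: "dv j (Suc i) = pv (dv j i)" by (simp add: dv_def)

lemma dv_dist: "i \<le> dist j \<Longrightarrow> dist (dv j i) = dist j - i \<and> rt (dv j i) = rt j"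
proof (induction i)
  case 0 then show ?case by simp
next
  case (Suc i)
  then have ih: "dist (dv j i) = dist j - i" "rt (dv j i) = rt j" by auto
  then have pos: "0 < dist (dv j i)" using Suc.prems by simp
  from par_prop[OF pos] have l: "link_edge cs (pe (dv j i)) (dv j i) (pv (dv j i))"
    and s: "Suc (dist (pv (dv j i))) = dist (dv j i)" by auto
  have "dist (pv (dv j i)) = dist j - Suc i" using s ih(1) by simp
  moreover have "rt (pv (dv j i)) = rt j" using link_rt[OF l] ih(2) by simp
  ultimately show ?case unfolding dv_Suc by simp
qed

lemma dv_link: assumes "i < dist j" shows "link_edge cs (de j i) (dv j i) (dv j (Suc i))"
proof -
  have "0 < dist (dv j i)" using dv_dist[of i j] assms by simp
  then show ?thesis using par_prop unfolding de_def dv_Suc by blast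
qed

lemma dv_end: "dv j (dist j) = rt j"
  using dv_dist[of "dist j" j] dist0 by simp

lemma dv_inj: assumes "a \<le> dist k" "b \<le> dist k'" "dist k = dist k'" "dv k a = dv k' b"
  shows "a = b"
proof -
  have "dist k - a = dist k' - b" using dv_dist[OF assms(1)] dv_dist[OF assms(2)] assms(4) by simp
  then show ?thesis using assms(1-3) by simp
qed

lemma de_dist: assumes "i < dist k" "link_edge cs (de k i) a b"
  shows "dist a \<le> dist k \<and> dist b \<le> dist k \<and> (dist a = Suc (dist b) \<or> dist b = Suc (dist a))"
proof -
  have l: "link_edge cs (de k i) (dv k i) (dv k (Suc i))" by (rule dv_link[OF assms(1)])
  have "dist (dv k i) = dist k - i" "dist (dv k (Suc i)) = dist k - Suc i"
    using dv_dist assms(1) by auto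
  moreover have "(dv k i = a \<and> dv k (Suc i) = b) \<or> (dv k i = b \<and> dv k (Suc i) = a)"
    using link_ends[OF l assms(2)] by blast
  ultimately show ?thesis using assms(1) by (elim disjE) auto
qed

lemma de_eq: assumes "a < dist k" "b < dist k'" "dist k = dist k'" "de k a = de k' b"
  shows "a = b \<and> dv k a = dv k' b"
proof -
  have l1: "link_edge cs (de k a) (dv k a) (dv k (Suc a))" by (rule dv_link[OF assms(1)])
  have l2: "link_edge cs (de k a) (dv k' b) (dv k' (Suc b))" using dv_link[OF assms(2)] assms(4) by simp
  from link_ends[OF l1 l2] show ?thesis
  proof
    assume "dv k a = dv k' b \<and> dv k (Suc a) = dv k' (Suc b)"
    then show ?thesis using dv_inj[of a k b k'] assms by simp
  next
    assume h: "dv k a = dv k' (Suc b) \<and> dv k (Suc a) = dv k' b"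
    have "a = Suc b" using dv_inj[of a k "Suc b" k'] h assms by simp
    moreover have "Suc a = b" using dv_inj[of "Suc a" k b k'] h assms by simp
    ultimately show ?thesis by simp
  qed
qed

lemma vpath:
  assumes "dist k = n" "dist k' = n" "rt k = rt k'"
  obtains m P Q where "P 0 = k" "P (2*m) = k'" "\<forall>i<2*m. link_edge cs (Q i) (P i) (P (Suc i))"
    "inj_on P {0..2*m}" "inj_on Q {..<2*m}" "\<forall>i\<le>2*m. dist (P i) \<le> n"
    "\<forall>i<2*m. \<forall>a b. link_edge cs (Q i) a b \<longrightarrow> dist a \<le> n \<and> dist b \<le> n \<and> (dist a = Suc (dist b) \<or> dist b = Suc (dist a))"
proof -
  have ex: "dv k n = dv k' n" using dv_end[of k] dv_end[of k'] assms by simp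
  define m where "m = (LEAST i. dv k i = dv k' i)"
  have mm: "dv k m = dv k' m" unfolding m_def by (rule LeastI[of _ n]) (rule ex)
  have mn: "m \<le> n" unfolding m_def by (rule Least_le) (rule ex)
  have mlt: "\<And>i. i < m \<Longrightarrow> dv k i \<noteq> dv k' i" unfolding m_def by (rule not_less_Least)
  define P where "P i = (if i \<le> m then dv k i else dv k' (2*m - i))" for i
  define Q where "Q i = (if i < m then de k i else de k' (2*m - Suc i))" for i
  have P2: "i \<ge> m \<Longrightarrow> P i = dv k' (2*m - i)" for i
    using mm by (cases "i \<le> m") (auto simp: P_def)
  show ?thesis
  proof (rule that[of P m Q])
    show "P 0 = k" by (simp add: P_def)
    show "P (2*m) = k'" using P2[of "2*m"] by simp
    show "\<forall>i<2*m. link_edge cs (Q i) (P i) (P (Suc i))"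
    proof (intro allI impI)
      fix i assume i: "i < 2*m"
      show "link_edge cs (Q i) (P i) (P (Suc i))"
      proof (cases "i < m")
        case True
        then show ?thesis using dv_link[of i k] assms mn by (simp add: P_def Q_def)
      next
        case False
        define b where "b = 2*m - Suc i"
        have b: "b < dist k'" "Suc b = 2*m - i" using i False mn assms by (auto simp: b_def)
        have "link_edge cs (de k' b) (dv k' b) (dv k' (Suc b))" by (rule dv_link[OF b(1)])
        then have "link_edge cs (de k' b) (dv k' (Suc b)) (dv k' b)" by (rule link_sym)
        moreover have "P i = dv k' (Suc b)" using P2[of i] False b by simp
        moreover have "P (Suc i) = dv k' b" using P2[of "Suc i"] False b by (simp add: b_def)
        ultimately show ?thesis using False by (simp add: Q_def b_def)
      qed
    qed
    show "inj_on P {0..2*m}"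
    proof (rule inj_onI)
      fix i j assume ij: "i \<in> {0..2*m}" "j \<in> {0..2*m}" "P i = P j"
      have c1: "i = j" if "i \<le> m" "j \<le> m" "P i = P j" for i j
        using that dv_inj[of i k j k] mn assms by (simp add: P_def)
      have c2: False if "i \<le> m" "\<not> j \<le> m" "j \<le> 2*m" "P i = P j" for i j
      proof -
        have "dv k i = dv k' (2*m - j)" using that by (simp add: P_def)
        then have "i = 2*m - j" using dv_inj[of i k "2*m - j" k'] that mn assms by simp
        then have "i < m" using that by simp
        then show False using mlt \<open>dv k i = dv k' (2*m - j)\<close> \<open>i = 2*m - j\<close> by simp
      qed
      have c3: "i = j" if "\<not> i \<le> m" "\<not> j \<le> m" "i \<le> 2*m" "j \<le> 2*m" "P i = P j" for i j
      proof -
        have "dv k' (2*m - i) = dv k' (2*m - j)" using that by (simp add: P_def)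
        then have "2*m - i = 2*m - j" using dv_inj[of "2*m - i" k' "2*m - j" k'] that mn assms by simp
        then show ?thesis using that by simp
      qed
      show "i = j"
        using c1[of i j] c2[of i j] c2[of j i] c3[of i j] ij by (cases "i \<le> m"; cases "j \<le> m") auto
    qed
    show "inj_on Q {..<2*m}"
    proof (rule inj_onI)
      fix i j assume ij: "i \<in> {..<2*m}" "j \<in> {..<2*m}" "Q i = Q j"
      have c1: "i = j" if "i < m" "j < m" "Q i = Q j" for i j
        using that de_eq[of i k j k] mn assms by (simp add: Q_def)
      have c2: False if "i < m" "\<not> j < m" "j < 2*m" "Q i = Q j" for i j
      proof -
        have eq: "de k i = de k' (2*m - Suc j)" using that by (simp add: Q_def)
        have "i = 2*m - Suc j \<and> dv k i = dv k' (2*m - Suc j)"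
          by (rule de_eq[OF _ _ _ eq]) (use that mn assms in auto)
        then have "dv k i = dv k' i" by metis
        then show False using mlt[of i] that(1) by blast
      qed
      have c3: "i = j" if "\<not> i < m" "\<not> j < m" "i < 2*m" "j < 2*m" "Q i = Q j" for i j
      proof -
        have "de k' (2*m - Suc i) = de k' (2*m - Suc j)" using that by (simp add: Q_def)
        then have "2*m - Suc i = 2*m - Suc j" using de_eq[of "2*m - Suc i" k' "2*m - Suc j" k'] that mn assms by simp
        then show ?thesis using that by simp
      qed
      show "i = j"
        using c1[of i j] c2[of i j] c2[of j i] c3[of i j] ij by (cases "i < m"; cases "j < m") auto
    qed
    show "\<forall>i\<le>2*m. dist (P i) \<le> n"
      using dv_dist[of _ k] dv_dist[of _ k'] assms mn by (auto simp: P_def)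
    show "\<forall>i<2*m. \<forall>a b. link_edge cs (Q i) a b \<longrightarrow> dist a \<le> n \<and> dist b \<le> n \<and> (dist a = Suc (dist b) \<or> dist b = Suc (dist a))"
    proof (intro allI impI)
      fix i a b assume i: "i < 2*m" and l: "link_edge cs (Q i) a b"
      show "dist a \<le> n \<and> dist b \<le> n \<and> (dist a = Suc (dist b) \<or> dist b = Suc (dist a))"
      proof (cases "i < m")
        case True
        then show ?thesis using de_dist[of i k a b] l mn assms by (simp add: Q_def)
      next
        case False
        then show ?thesis using de_dist[of "2*m - Suc i" k' a b] l mn assms i by (simp add: Q_def)
      qed
    qed
  qed
qed

lemma link_neq_dist: assumes "link_edge cs p j k" "dist j = dist k" shows False
proof -
  have "rt k = rt j" using link_rt[OF assms(1)] by simp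
  then obtain m P Q where v: "P 0 = k" "P (2*m) = j" "\<forall>i<2*m. link_edge cs (Q i) (P i) (P (Suc i))"
    "inj_on P {0..2*m}" "inj_on Q {..<2*m}"
    "\<forall>i<2*m. \<forall>a b. link_edge cs (Q i) a b \<longrightarrow> dist a \<le> dist k \<and> dist b \<le> dist k \<and> (dist a = Suc (dist b) \<or> dist b = Suc (dist a))"
    using vpath[of k "dist k" j] assms(2) by metis
  define f where "f i = (if i = 0 then j else P (i - 1))" for i
  define g where "g i = (if i = 0 then p else Q (i - 1))" for i
  show False
  proof (rule cyc_false[of "Suc (2*m)" f g])
    show "1 \<le> Suc (2*m)" by simp
    show "f 0 = f (Suc (2*m))" using v(2) by (simp add: f_def)
    show "inj_on f {1..Suc (2*m)}"
    proof (rule inj_onI)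
      fix x y assume "x \<in> {1..Suc (2*m)}" "y \<in> {1..Suc (2*m)}" "f x = f y"
      then have "x - 1 \<in> {0..2*m}" "y - 1 \<in> {0..2*m}" "P (x - 1) = P (y - 1)" by (auto simp: f_def)
      then have "x - 1 = y - 1" using v(4) by (meson inj_onD)
      moreover have "1 \<le> x" "1 \<le> y" using \<open>x \<in> _\<close> \<open>y \<in> _\<close> by auto
      ultimately show "x = y" by linarith
    qed
    show "inj_on g {..<Suc (2*m)}"
    proof (rule inj_onI)
      fix x y assume xy: "x \<in> {..<Suc (2*m)}" "y \<in> {..<Suc (2*m)}" "g x = g y"
      have nq: False if "z < 2*m" "Q z = p" for z
        using v(6) that assms by force
      show "x = y"
      proof (cases "x = 0"; cases "y = 0")
        assume "x \<noteq> 0" "y \<noteq> 0"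
        then have "Q (x - 1) = Q (y - 1)" "x - 1 \<in> {..<2*m}" "y - 1 \<in> {..<2*m}" using xy by (auto simp: g_def)
        then have "x - 1 = y - 1" using v(5) by (meson inj_onD)
        then show "x = y" using \<open>x \<noteq> 0\<close> \<open>y \<noteq> 0\<close> by arith
      next
        assume "x = 0" "y \<noteq> 0"
        then have "Q (y - 1) = p" "y - 1 < 2*m" using xy by (auto simp: g_def)
        then show "x = y" using nq by blast
      next
        assume "x \<noteq> 0" "y = 0"
        then have "Q (x - 1) = p" "x - 1 < 2*m" using xy by (auto simp: g_def)
        then show "x = y" using nq by blast
      qed simp
    qed
    show "\<forall>i<Suc (2*m). link_edge cs (g i) (f i) (f (Suc i))"
    proof (intro allI impI)
      fix i assume i: "i < Suc (2*m)"
      show "link_edge cs (g i) (f i) (f (Suc i))"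
      proof (cases "i = 0")
        case True then show ?thesis using assms(1) v(1) by (simp add: f_def g_def)
      next
        case False
        have "link_edge cs (Q (i - 1)) (P (i - 1)) (P (Suc (i - 1)))" using v(3)[rule_format, of "i-1"] i False by simp
        moreover have "Suc (i - 1) = i" using False by simp
        ultimately show ?thesis using False by (simp add: f_def g_def)
      qed
    qed
  qed
qed

lemma link_par_dir: assumes "link_edge cs p j k" "dist j = Suc (dist k)" shows "pe j = p \<and> pv j = k"
proof (rule ccontr)
  assume neq: "\<not> (pe j = p \<and> pv j = k)"
  have pj: "0 < dist j" using assms(2) by simp
  define p' where "p' = pe j"
  define k' where "k' = pv j"
  have l': "link_edge cs p' j k'" and dk': "dist k' = dist k"
    using par_prop[OF pj] assms(2) unfolding p'_def k'_def by auto
  have pp: "p \<noteq> p'"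
  proof
    assume "p = p'"
    then have "(j = j \<and> k = k') \<or> (j = k' \<and> k = j)" using link_ends[OF assms(1)] l' by blast
    then show False using neq assms(2) unfolding p'_def k'_def using \<open>p = p'\<close> p'_def by auto
  qed
  have "rt k = rt k'" using link_rt[OF assms(1)] link_rt[OF l'] by simp
  then obtain m P Q where v: "P 0 = k" "P (2*m) = k'" "\<forall>i<2*m. link_edge cs (Q i) (P i) (P (Suc i))"
    "inj_on P {0..2*m}" "inj_on Q {..<2*m}" "\<forall>i\<le>2*m. dist (P i) \<le> dist k"
    "\<forall>i<2*m. \<forall>a b. link_edge cs (Q i) a b \<longrightarrow> dist a \<le> dist k \<and> dist b \<le> dist k \<and> (dist a = Suc (dist b) \<or> dist b = Suc (dist a))"
    using vpath[of k "dist k" k'] dk' by metis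
  define f where "f i = (if i = 0 then j else if i \<le> Suc (2*m) then P (i - 1) else j)" for i
  define g where "g i = (if i = 0 then p else if i \<le> 2*m then Q (i - 1) else p')" for i
  show False
  proof (rule cyc_false[of "Suc (Suc (2*m))" f g])
    show "1 \<le> Suc (Suc (2*m))" by simp
    show "f 0 = f (Suc (Suc (2*m)))" by (simp add: f_def)
    have Pj: "P z \<noteq> j" if "z \<le> 2*m" for z using v(6) that assms(2) by force
    show "inj_on f {1..Suc (Suc (2*m))}"
    proof (rule inj_onI)
      fix x y assume xy: "x \<in> {1..Suc (Suc (2*m))}" "y \<in> {1..Suc (Suc (2*m))}" "f x = f y"
      show "x = y"
      proof (cases "x \<le> Suc (2*m)"; cases "y \<le> Suc (2*m)")
        assume "x \<le> Suc (2*m)" "y \<le> Suc (2*m)"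
        then have "x - 1 \<in> {0..2*m}" "y - 1 \<in> {0..2*m}" "P (x - 1) = P (y - 1)" using xy by (auto simp: f_def)
        then have "x - 1 = y - 1" using v(4) by (meson inj_onD)
        moreover have "1 \<le> x" "1 \<le> y" using xy by auto
        ultimately show "x = y" by linarith
      next
        assume "x \<le> Suc (2*m)" "\<not> y \<le> Suc (2*m)"
        then have "P (x - 1) = j" "x - 1 \<le> 2*m" using xy by (auto simp: f_def)
        then show "x = y" using Pj by blast
      next
        assume "\<not> x \<le> Suc (2*m)" "y \<le> Suc (2*m)"
        then have "P (y - 1) = j" "y - 1 \<le> 2*m" using xy by (auto simp: f_def)
        then show "x = y" using Pj by blast
      next
        assume "\<not> x \<le> Suc (2*m)" "\<not> y \<le> Suc (2*m)"
        then show "x = y" using xy by auto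
      qed
    qed
    have nq: False if "z < 2*m" "Q z = p \<or> Q z = p'" for z
    proof -
      have "link_edge cs (Q z) j k \<or> link_edge cs (Q z) j k'" using that assms(1) l' by blast
      then show False using v(7) that(1) assms(2) dk' by force
    qed
    show "inj_on g {..<Suc (Suc (2*m))}"
    proof (rule inj_onI)
      fix x y assume xy: "x \<in> {..<Suc (Suc (2*m))}" "y \<in> {..<Suc (Suc (2*m))}" "g x = g y"
      have gx: "(x = 0 \<and> g x = p) \<or> (x \<noteq> 0 \<and> x \<le> 2*m \<and> g x = Q (x - 1)) \<or> (x = Suc (2*m) \<and> g x = p')"
        using xy(1) by (auto simp: g_def)
      have gy: "(y = 0 \<and> g y = p) \<or> (y \<noteq> 0 \<and> y \<le> 2*m \<and> g y = Q (y - 1)) \<or> (y = Suc (2*m) \<and> g y = p')"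
        using xy(2) by (auto simp: g_def)
      have nq1: "\<And>z. z < 2*m \<Longrightarrow> Q z \<noteq> p" and nq2: "\<And>z. z < 2*m \<Longrightarrow> Q z \<noteq> p'" using nq by blast+
      have qq: "x = y" if "x \<noteq> 0 \<and> x \<le> 2*m" "y \<noteq> 0 \<and> y \<le> 2*m" "Q (x - 1) = Q (y - 1)"
      proof -
        have "x - 1 \<in> {..<2*m}" "y - 1 \<in> {..<2*m}" using that by auto
        then have "x - 1 = y - 1" using v(5) that(3) by (meson inj_onD)
        then show "x = y" using that by arith
      qed
      have m1: "x - 1 < 2*m" if "x \<noteq> 0 \<and> x \<le> 2*m" for x using that by arith
      from gx gy xy(3) show "x = y"
        apply (elim disjE conjE)
        using qq pp nq1 nq2 m1 by metis+
    qed
    show "\<forall>i<Suc (Suc (2*m)). link_edge cs (g i) (f i) (f (Suc i))"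
    proof (intro allI impI)
      fix i assume i: "i < Suc (Suc (2*m))"
      consider "i = 0" | "i \<noteq> 0 \<and> i \<le> 2*m" | "i = Suc (2*m)" using i by linarith
      then show "link_edge cs (g i) (f i) (f (Suc i))"
      proof cases
        case 1 then show ?thesis using assms(1) v(1) by (simp add: f_def g_def)
      next
        case 2
        then have "i - 1 < 2*m" by arith
        then have "link_edge cs (Q (i - 1)) (P (i - 1)) (P (Suc (i - 1)))" using v(3) by blast
        moreover have "Suc (i - 1) = i" using 2 by simp
        ultimately show ?thesis using 2 by (simp add: f_def g_def)
      next
        case 3
        then show ?thesis using link_sym[OF l'] v(2) by (simp add: f_def g_def)
      qed
    qed
  qed
qed

lemma link_par: assumes "link_edge cs p j k"
  shows "(pe j = p \<and> pv j = k \<and> dist j = Suc (dist k)) \<or> (pe k = p \<and> pv k = j \<and> dist k = Suc (dist j))"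
proof -
  have "dist j \<le> Suc (dist k)" "dist k \<le> Suc (dist j)"
    using dist_tri[OF assms] dist_tri[OF link_sym[OF assms]] by auto
  moreover have "dist j \<noteq> dist k" using link_neq_dist[OF assms] by blast
  ultimately have "dist j = Suc (dist k) \<or> dist k = Suc (dist j)" by linarith
  then show ?thesis using link_par_dir[OF assms] link_par_dir[OF link_sym[OF assms]] by blast
qed

end

context RP begin

definition kJ :: "nat \<Rightarrow> nat set" where "kJ q = (case cs!q of KHot J s t K \<Rightarrow> J | _ \<Rightarrow> {})"
definition ks :: "nat \<Rightarrow> nat \<Rightarrow> int" where "ks q = (case cs!q of KHot J s t K \<Rightarrow> s | _ \<Rightarrow> (\<lambda>_. 0))"
definition kt :: "nat \<Rightarrow> nat \<Rightarrow> term_kind" where "kt q = (case cs!q of KHot J s t K \<Rightarrow> t | _ \<Rightarrow> (\<lambda>_. TX))"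
definition kq :: "nat \<Rightarrow> nat" where "kq j = (SOME q. q < length cs \<and> j \<in> kJ q)"

lemma khot_iff: "j \<in> khot_indices cs \<longleftrightarrow> (\<exists>q<length cs. j \<in> kJ q)"
proof
  assume "j \<in> khot_indices cs"
  then obtain con where con: "con \<in> set cs" "j \<in> (case con of KHot J s t K \<Rightarrow> J | _ \<Rightarrow> {})"
    unfolding khot_indices_def by blast
  then obtain q where "q < length cs" "cs!q = con" by (meson in_set_conv_nth)
  then show "\<exists>q<length cs. j \<in> kJ q" using con unfolding kJ_def by auto
next
  assume "\<exists>q<length cs. j \<in> kJ q"
  then obtain q where q: "q < length cs" "j \<in> kJ q" by blast
  have "cs!q \<in> set cs" using q(1) by simp
  then show "j \<in> khot_indices cs" using q(2) unfolding khot_indices_def kJ_def by blast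
qed

lemma kJ_KHot: "j \<in> kJ q \<Longrightarrow> \<exists>J s t K. cs!q = KHot J s t K \<and> j \<in> J"
  unfolding kJ_def by (cases "cs!q") auto

lemma kq_unique: assumes "q < length cs" "j \<in> kJ q" shows "kq j = q"
proof -
  have uq: "q' = q" if qq: "q' < length cs" "j \<in> kJ q'" for q'
  proof (rule ccontr)
    assume ne: "q' \<noteq> q"
    obtain J s t K where a: "cs!q = KHot J s t K" "j \<in> J" using kJ_KHot[OF assms(2)] by blast
    obtain J' s' t' K' where b: "cs!q' = KHot J' s' t' K'" "j \<in> J'" using kJ_KHot[OF qq(2)] by blast
    have "J' \<inter> J = {}" using A1 qq(1) assms(1) ne a b unfolding assumption_A1_def by fastforce
    then show False using a b by blast
  qed
  have "kq j < length cs \<and> j \<in> kJ (kq j)" unfolding kq_def by (rule someI[of _ q]) (use assms in blast)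
  then show ?thesis using uq by blast
qed

lemma kq_prop: "j \<in> khot_indices cs \<Longrightarrow> kq j < length cs \<and> j \<in> kJ (kq j)"
  using khot_iff kq_unique by metis

lemma kJ_lt: assumes "q < length cs" "j \<in> kJ q" shows "j < d"
proof -
  obtain J s t K where a: "cs!q = KHot J s t K" "j \<in> J" using kJ_KHot[OF assms(2)] by blast
  have "cs!q \<in> set cs" using assms(1) by simp
  then have "wf_constr d (cs!q)" using wf by blast
  then show ?thesis using a by auto
qed

lemma kJ_fin: assumes "q < length cs" shows "finite (kJ q)"
proof -
  have "kJ q \<subseteq> {..<d}" using kJ_lt[OF assms] by blast
  then show ?thesis using finite_subset by blast
qed

definition kpre :: "nat \<Rightarrow> nat set" where
  "kpre j = {i \<in> kJ (kq j). i < j \<and> ks (kq j) i = ks (kq j) j}"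

definition cpos :: "nat \<Rightarrow> nat" where
  "cpos r = (if r \<in> khot_indices cs then card (kpre r) else 0)"

definition dep :: "nat \<Rightarrow> nat" where "dep j = dist j + cpos (rt j)"

definition lk :: "nat \<Rightarrow> nat \<Rightarrow> term_kind" where
  "lk p v = (case cs!p of Link a ta b tb \<Rightarrow> if v = a then ta else tb | _ \<Rightarrow> TX)"

definition startn :: "term_kind \<Rightarrow> nat" where "startn t = (if t = TA then 1 else 0)"
definition endn :: "term_kind \<Rightarrow> nat" where "endn t = (if t = TX then 1 else 2)"

definition hang :: "nat \<Rightarrow> (nat \<times> nat) option" where
  "hang j = (if 0 < dist j then Some (pv j, endn (lk (pe j) (pv j)))
     else if j \<in> khot_indices cs \<and> kpre j \<noteq> {} then Some (Max (kpre j), startn (kt (kq j) (Max (kpre j))))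
     else None)"

definition tp :: "nat \<Rightarrow> nat" where
  "tp j = (if 0 < dist j then endn (lk (pe j) j) else if j \<in> khot_indices cs then endn (kt (kq j) j) else 2)"

lemma tp_range: "tp j = 1 \<or> tp j = 2"
  unfolding tp_def endn_def by auto

lemma khot_rt: "j \<in> khot_indices cs \<Longrightarrow> rt j = j \<and> dist j = 0"
  using rt_khot dist0 by blast

lemma kpre_sub: "j \<in> khot_indices cs \<Longrightarrow> kpre j \<subseteq> kJ (kq j) \<and> finite (kpre j)"
  using kq_prop kJ_fin unfolding kpre_def by (metis (no_types, lifting) finite_subset mem_Collect_eq subsetI)

lemma hang_dep: assumes "hang j = Some (k, i)" shows "dep j = Suc (dep k) \<and> k < d"
proof (cases "0 < dist j")
  case True
  then have k: "k = pv j" using assms by (simp add: hang_def)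
  have l: "link_edge cs (pe j) j (pv j)" "Suc (dist (pv j)) = dist j" using par_prop[OF True] by auto
  have "rt (pv j) = rt j" using link_rt[OF l(1)] by simp
  then show ?thesis using l k link_lt[OF l(1)] unfolding dep_def by simp
next
  case False
  then have h: "j \<in> khot_indices cs" "kpre j \<noteq> {}" "k = Max (kpre j)"
    using assms by (auto simp: hang_def split: if_splits)
  have q: "kq j < length cs" "j \<in> kJ (kq j)" using kq_prop[OF h(1)] by auto
  have fin: "finite (kpre j)" using kpre_sub[OF h(1)] by blast
  have kin: "k \<in> kpre j" using h fin by simp
  then have kJ: "k \<in> kJ (kq j)" "k < j" "ks (kq j) k = ks (kq j) j" unfolding kpre_def by auto
  have kkh: "k \<in> khot_indices cs" using khot_iff q(1) kJ(1) by blast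
  have kqk: "kq k = kq j" using kq_unique[OF q(1) kJ(1)] .
  have "kpre j = insert k (kpre k)"
  proof
    show "kpre j \<subseteq> insert k (kpre k)"
    proof
      fix i assume i: "i \<in> kpre j"
      then have "i \<le> k" using h fin by simp
      then show "i \<in> insert k (kpre k)" using i kJ kqk unfolding kpre_def by auto
    qed
    show "insert k (kpre k) \<subseteq> kpre j" using kin kJ kqk unfolding kpre_def by auto
  qed
  moreover have "k \<notin> kpre k" unfolding kpre_def by simp
  moreover have "finite (kpre k)" using kpre_sub[OF kkh] by blast
  ultimately have "card (kpre j) = Suc (card (kpre k))" by simp
  moreover have "rt j = j" "dist j = 0" "rt k = k" "dist k = 0" using khot_rt h(1) kkh by auto
  ultimately show ?thesis using h(1) kkh kJ_lt[OF q(1) kJ(1)] unfolding dep_def cpos_def by simp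
qed

definition intl :: "nat \<Rightarrow> nat \<Rightarrow> nat set" where
  "intl j i = (if tp j = 1 then (if i = 0 then {j} else if i = 2 then {d+j} else {})
     else (if i = 0 then {j, d+j} else if i = 1 then {d+j} else {}))"

primrec nanc :: "nat \<Rightarrow> nat \<Rightarrow> nat \<Rightarrow> nat set" where
  "nanc 0 j i = intl j i"
| "nanc (Suc n) j i = intl j i \<union> (case hang j of None \<Rightarrow> {} | Some (k,i') \<Rightarrow> nanc n k i')"

definition anc :: "nat \<Rightarrow> nat \<Rightarrow> nat set" where "anc j i = nanc (dep j) j i"

definition Gs :: "nat \<Rightarrow> nat set" where
  "Gs j = (case hang j of None \<Rightarrow> {} | Some (k,i') \<Rightarrow> anc k i')"

lemma anc_eq: "anc j i = intl j i \<union> Gs j"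
proof (cases "hang j")
  case None
  then show ?thesis unfolding anc_def Gs_def by (cases "dep j") auto
next
  case (Some a)
  then obtain k i' where h: "hang j = Some (k,i')" by (cases a) auto
  then show ?thesis using hang_dep[OF h] unfolding anc_def Gs_def by simp
qed

lemma intl_sub: "intl j i \<subseteq> {j, d+j}" unfolding intl_def by auto

lemma anc_feat: "j < d \<Longrightarrow> c \<in> anc j i \<Longrightarrow> c \<in> {j, d+j} \<or> (\<exists>k<d. dep k < dep j \<and> c \<in> {k, d+k})"
proof (induction "dep j" arbitrary: j i rule: less_induct)
  case less
  show ?case
  proof (cases "c \<in> intl j i")
    case True then show ?thesis using intl_sub by blast
  next
    case False
    then have "c \<in> Gs j" using less.prems anc_eq by blast
    then obtain k i' where h: "hang j = Some (k,i')" "c \<in> anc k i'"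
      unfolding Gs_def by (auto split: option.splits)
    have dk: "dep j = Suc (dep k)" "k < d" using hang_dep[OF h(1)] by auto
    have "c \<in> {k, d+k} \<or> (\<exists>k'<d. dep k' < dep k \<and> c \<in> {k', d+k'})"
      using less.hyps[of k i'] dk h(2) by simp
    then show ?thesis using dk by (metis lessI less_trans)
  qed
qed

lemma Gs_feat: assumes "c \<in> Gs j" shows "\<exists>k<d. dep k < dep j \<and> c \<in> {k, d+k}"
proof -
  obtain k i' where h: "hang j = Some (k,i')" "c \<in> anc k i'"
    using assms unfolding Gs_def by (auto split: option.splits)
  have dk: "dep j = Suc (dep k)" "k < d" using hang_dep[OF h(1)] by auto
  show ?thesis using anc_feat[OF dk(2) h(2)] dk by (metis lessI less_trans)
qed

lemma Gs_not_own: assumes "j < d" shows "j \<notin> Gs j" "d + j \<notin> Gs j"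
proof -
  show "j \<notin> Gs j"
  proof
    assume "j \<in> Gs j"
    then obtain k where "k < d" "dep k < dep j" "j \<in> {k, d+k}" using Gs_feat by blast
    then show False using assms by auto
  qed
  show "d + j \<notin> Gs j"
  proof
    assume "d + j \<in> Gs j"
    then obtain k where "k < d" "dep k < dep j" "d + j \<in> {k, d+k}" using Gs_feat by blast
    then show False using assms by auto
  qed
qed

definition sg :: "nat \<Rightarrow> int" where
  "sg c = (if c < d then 1 else if tp (c - d) = 1 then -1 else 1)"

definition hh :: "nat \<Rightarrow> nat" where
  "hh c = 2 * dep (if c < d then c else c - d) + (if c < d \<and> tp c \<noteq> 1 then 1 else 0)"

lemma term_rep: assumes "j < d"
  shows "term_coef d j t c = sg c * ((if c \<in> anc j (startn t) then 1 else 0) - (if c \<in> anc j (endn t) then 1 else 0))"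
proof (cases "c \<in> Gs j")
  case True
  then have "c \<noteq> j" "c \<noteq> d + j" using Gs_not_own[OF assms] by auto
  then show ?thesis using True anc_eq unfolding term_coef_def by simp
next
  case False
  have jd: "j \<noteq> d + j" using d1 by simp
  have sgj: "sg j = 1" "sg (d + j) = (if tp j = 1 then -1 else 1)" using assms by (auto simp: sg_def)
  have "term_coef d j t c = sg c * ((if c \<in> intl j (startn t) then 1 else 0) - (if c \<in> intl j (endn t) then 1 else 0))"
    using tp_range[of j] jd sgj
    by (cases t; cases "c = j"; cases "c = d + j") (auto simp: term_coef_def intl_def startn_def endn_def)
  then show ?thesis using False anc_eq by simp
qed

end

lemma telescope:
  fixes f :: "nat \<Rightarrow> int"
  assumes "finite A"
  shows "(\<Sum>j\<in>A. (f j - (if {i\<in>A. i<j} \<noteq> {} then f (Max {i\<in>A. i<j}) else 0))) = (if A = {} then 0 else f (Max A))"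
  using assms
proof (induction A rule: finite_linorder_max_induct)
  case empty then show ?case by simp
next
  case (insert b A)
  have bA: "b \<notin> A" using insert.hyps(2) by blast
  have s1: "{i \<in> insert b A. i < x} = {i\<in>A. i < x}" if "x \<in> A" for x
    using insert.hyps(2) that by auto
  have s2: "{i \<in> insert b A. i < b} = A" using insert.hyps(2) by auto
  define T where "T X j = f j - (if {i\<in>X. i<j} \<noteq> {} then f (Max {i\<in>X. i<j}) else 0)" for X j
  have "sum (T (insert b A)) (insert b A) = T (insert b A) b + sum (T (insert b A)) A"
    by (rule sum.insert[OF insert.hyps(1) bA])
  also have "sum (T (insert b A)) A = sum (T A) A"
    by (rule sum.cong[OF refl]) (simp only: T_def s1)
  also have "T (insert b A) b = f b - (if A \<noteq> {} then f (Max A) else 0)"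
    by (simp only: T_def s2)
  also have "sum (T A) A = (if A = {} then 0 else f (Max A))" using insert.IH unfolding T_def .
  also have "f b - (if A \<noteq> {} then f (Max A) else 0) + (if A = {} then 0 else f (Max A)) = f b" by simp
  also have "f b = f (Max (insert b A))"
    using insert.hyps(1,2) by (cases "A = {}") (auto intro!: Max_eqI[symmetric])
  finally have "sum (T (insert b A)) (insert b A) = (if insert b A = {} then 0 else f (Max (insert b A)))" by simp
  then show ?case unfolding T_def .
qed

context RP begin

definition ft :: "nat \<Rightarrow> nat" where "ft c = (if c < d then c else c - d)"
definition low :: "nat \<Rightarrow> nat" where "low e = (if e < d then 0 else if tp (e - d) = 1 then 2 else 1)"

lemma hh_feat: "k < d \<Longrightarrow> hh k = 2 * dep k + (if tp k \<noteq> 1 then 1 else 0) \<and> hh (d + k) = 2 * dep k"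
  unfolding hh_def by simp

lemma Gs_hh: assumes "f \<in> Gs j" shows "hh f < 2 * dep j"
proof -
  obtain k where k: "k < d" "dep k < dep j" "f \<in> {k, d+k}" using Gs_feat[OF assms] by blast
  then have "hh f \<le> 2 * dep k + 1" using hh_feat[OF k(1)] by auto
  then show ?thesis using k(2) by linarith
qed

lemma intl_hh: assumes "j < d" "f \<in> intl j i" shows "2 * dep j \<le> hh f"
proof -
  have "f = j \<or> f = d + j" using intl_sub assms(2) by blast
  then show ?thesis using hh_feat[OF assms(1)] by auto
qed

lemma anc_top: "anc j (tp j) = Gs j"
  using anc_eq[of j "tp j"] tp_range[of j] unfolding intl_def by auto

lemma K: "j < d \<Longrightarrow> e \<in> anc j i \<Longrightarrow> {f \<in> anc j i. hh f \<le> hh e} = {f \<in> anc (ft e) (low e). hh f \<le> hh e}"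
proof (induction "dep j" arbitrary: j i rule: less_induct)
  case less
  show ?case
  proof (cases "e \<in> Gs j")
    case True
    obtain k i' where h: "hang j = Some (k,i')" "e \<in> anc k i'"
      using True unfolding Gs_def by (auto split: option.splits)
    have dk: "dep j = Suc (dep k)" "k < d" using hang_dep[OF h(1)] by auto
    have IH: "{f \<in> anc k i'. hh f \<le> hh e} = {f \<in> anc (ft e) (low e). hh f \<le> hh e}"
      using less.hyps[of k i'] dk h(2) by simp
    have he: "hh e < 2 * dep j" using Gs_hh[OF True] .
    have G: "Gs j = anc k i'" using h(1) unfolding Gs_def by simp
    have "{f \<in> anc j i. hh f \<le> hh e} = {f \<in> anc k i'. hh f \<le> hh e}"
    proof -
      have "\<forall>f\<in>intl j i. \<not> hh f \<le> hh e" using intl_hh[OF less.prems(1)] he by fastforce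
      then show ?thesis using anc_eq[of j i] G by auto
    qed
    then show ?thesis using IH by simp
  next
    case False
    then have ei: "e \<in> intl j i" using anc_eq less.prems(2) by blast
    have jd: "j \<noteq> d + j" using d1 by simp
    have hj: "hh j = 2 * dep j + (if tp j \<noteq> 1 then 1 else 0)" "hh (d + j) = 2 * dep j"
      using hh_feat[OF less.prems(1)] by auto
    have ej: "e = j \<or> e = d + j" using ei intl_sub by blast
    have fte: "ft e = j" using ej less.prems(1) by (auto simp: ft_def)
    have A: "{f \<in> intl j i. hh f \<le> hh e} = {f \<in> intl j (low e). hh f \<le> hh e}"
      using ej ei tp_range[of j] hj jd less.prems(1)
      by (elim disjE) (auto simp: intl_def low_def split: if_splits)
    have B: "\<forall>f\<in>Gs j. hh f \<le> hh e" using Gs_hh intl_hh[OF less.prems(1) ei] by fastforce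
    show ?thesis unfolding fte using anc_eq[of j i] anc_eq[of j "low e"] A B by blast
  qed
qed

definition Fam :: "nat set set" where "Fam = insert {} {anc j i | j i. j < d}"

lemma good: "goodfam (2*d) hh Fam"
  unfolding goodfam_def
proof (intro ballI allI impI)
  fix A B e f
  assume A: "A \<in> Fam" and B: "B \<in> Fam" and e: "e < 2*d" "e \<in> A" "e \<in> B" and f: "f < 2*d" "hh f \<le> hh e"
  obtain j i where ji: "j < d" "A = anc j i" using A e(2) unfolding Fam_def by auto
  obtain j' i' where ji': "j' < d" "B = anc j' i'" using B e(3) unfolding Fam_def by auto
  have "{f \<in> A. hh f \<le> hh e} = {f \<in> B. hh f \<le> hh e}"
    using K[of j e i] K[of j' e i'] ji ji' e by simp
  then show "f \<in> A \<longleftrightarrow> f \<in> B" using f(2) by blast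
qed

lemma khot_facts:
  assumes "r < length cs" "cs!r = KHot J s t K" "j \<in> J"
  shows "kq j = r \<and> j < d \<and> tp j = endn (t j) \<and> kpre j = {i\<in>J. i<j \<and> s i = s j} \<and>
    Gs j = (if kpre j \<noteq> {} then anc (Max (kpre j)) (startn (t (Max (kpre j)))) else {})"
proof -
  have jr: "j \<in> kJ r" using assms by (simp add: kJ_def)
  have q: "kq j = r" by (rule kq_unique[OF assms(1) jr])
  have kh: "j \<in> khot_indices cs" using khot_iff assms(1) jr by blast
  have d0: "dist j = 0" using khot_rt[OF kh] by simp
  have jd: "j < d" using kJ_lt[OF assms(1) jr] .
  have kt: "kt r = t" "ks r = s" "kJ r = J" using assms(2) by (simp_all add: kt_def ks_def kJ_def)
  have tpj: "tp j = endn (t j)" using d0 kh q kt unfolding tp_def by simp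
  have kp: "kpre j = {i\<in>J. i<j \<and> s i = s j}" unfolding kpre_def q kt by simp
  have "Gs j = (if kpre j \<noteq> {} then anc (Max (kpre j)) (startn (t (Max (kpre j)))) else {})"
    unfolding Gs_def hang_def using d0 kh q kt by simp
  then show ?thesis using q jd tpj kp by simp
qed

definition KS :: "nat set \<Rightarrow> (nat \<Rightarrow> int) \<Rightarrow> (nat \<Rightarrow> term_kind) \<Rightarrow> int \<Rightarrow> nat set" where
  "KS J s t v = (if {j\<in>J. s j = v} = {} then {} else anc (Max {j\<in>J. s j = v}) (startn (t (Max {j\<in>J. s j = v}))))"

lemma khot_part:
  assumes "r < length cs" "cs!r = KHot J s t K"
  shows "(\<Sum>j\<in>{j\<in>J. s j = v}. term_coef d j (t j) c) = sg c * (if c \<in> KS J s t v then 1 else 0)"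
proof -
  have "cs!r \<in> set cs" using assms(1) by simp
  then have wfc: "J \<subseteq> {..<d}" using wf assms(2) by fastforce
  then have finJ: "finite J" using finite_subset by blast
  define Jv where "Jv = {j\<in>J. s j = v}"
  have finJv: "finite Jv" using finJ unfolding Jv_def by simp
  define \<phi> where "\<phi> j = (if c \<in> anc j (startn (t j)) then 1 else 0 :: int)" for j
  have each: "term_coef d j (t j) c = sg c * (\<phi> j - (if {i\<in>Jv. i<j} \<noteq> {} then \<phi> (Max {i\<in>Jv. i<j}) else 0))"
    if j: "j \<in> Jv" for j
  proof -
    have jJ: "j \<in> J" "s j = v" using j unfolding Jv_def by auto
    note kf = khot_facts[OF assms jJ(1)]
    have kp: "kpre j = {i\<in>Jv. i<j}" using kf jJ unfolding Jv_def by auto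
    have a: "anc j (endn (t j)) = Gs j" using anc_top[of j] kf by simp
    have Gk: "Gs j = (if kpre j \<noteq> {} then anc (Max (kpre j)) (startn (t (Max (kpre j)))) else {})"
      using kf by blast
    have e: "anc j (endn (t j)) = (if {i\<in>Jv. i<j} \<noteq> {} then anc (Max {i\<in>Jv. i<j}) (startn (t (Max {i\<in>Jv. i<j}))) else {})"
      using Gk a by (simp only: kp)
    have tr: "term_coef d j (t j) c = sg c * ((if c \<in> anc j (startn (t j)) then 1 else 0) - (if c \<in> anc j (endn (t j)) then 1 else 0))"
      using term_rep[of j "t j" c] kf by blast
    show ?thesis
    proof (cases "{i\<in>Jv. i<j} = {}")
      case True
      then have "anc j (endn (t j)) = {}" using e by simp
      then show ?thesis using tr True unfolding \<phi>_def by simp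
    next
      case False
      then have "anc j (endn (t j)) = anc (Max {i\<in>Jv. i<j}) (startn (t (Max {i\<in>Jv. i<j})))" using e by simp
      then show ?thesis using tr False unfolding \<phi>_def by simp
    qed
  qed
  have "(\<Sum>j\<in>Jv. term_coef d j (t j) c) = (\<Sum>j\<in>Jv. sg c * (\<phi> j - (if {i\<in>Jv. i<j} \<noteq> {} then \<phi> (Max {i\<in>Jv. i<j}) else 0)))"
    using each by (rule sum.cong[OF refl])
  also have "\<dots> = sg c * (\<Sum>j\<in>Jv. (\<phi> j - (if {i\<in>Jv. i<j} \<noteq> {} then \<phi> (Max {i\<in>Jv. i<j}) else 0)))"
    by (simp add: sum_distrib_left)
  also have "\<dots> = sg c * (if Jv = {} then 0 else \<phi> (Max Jv))" using telescope[OF finJv, of \<phi>] by simp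
  also have "\<dots> = sg c * (if c \<in> KS J s t v then 1 else 0)"
    unfolding KS_def Jv_def[symmetric] \<phi>_def by simp
  finally show ?thesis unfolding Jv_def .
qed

lemma khot_row:
  assumes "r < length cs" "cs!r = KHot J s t K"
  shows "constr_row d (cs!r) c = sg c * ((if c \<in> KS J s t 1 then 1 else 0) - (if c \<in> KS J s t (-1) then 1 else 0))"
proof -
  have "cs!r \<in> set cs" using assms(1) by simp
  then have wfc: "J \<subseteq> {..<d}" "\<forall>j\<in>J. s j \<in> {1,-1}" using wf assms(2) by fastforce+
  then have finJ: "finite J" using finite_subset by blast
  have split: "J = {j\<in>J. s j = 1} \<union> {j\<in>J. s j = -1}" using wfc(2) by auto
  have "constr_row d (cs!r) c = (\<Sum>j\<in>J. s j * term_coef d j (t j) c)" using assms(2) by simp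
  also have "\<dots> = (\<Sum>j\<in>{j\<in>J. s j = 1}. s j * term_coef d j (t j) c) + (\<Sum>j\<in>{j\<in>J. s j = -1}. s j * term_coef d j (t j) c)"
    by (subst split, rule sum.union_disjoint) (use finJ in auto)
  also have "\<dots> = (\<Sum>j\<in>{j\<in>J. s j = 1}. term_coef d j (t j) c) - (\<Sum>j\<in>{j\<in>J. s j = -1}. term_coef d j (t j) c)"
    by (simp add: sum_negf)
  also have "\<dots> = sg c * ((if c \<in> KS J s t 1 then 1 else 0) - (if c \<in> KS J s t (-1) then 1 else 0))"
    using khot_part[OF assms, where v=1 and c=c] khot_part[OF assms, where v="-1" and c=c] by (simp add: algebra_simps)
  finally show ?thesis .
qed

lemma link_row:
  assumes "r < length cs" "cs!r = Link j tj k tk"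
  shows "constr_row d (cs!r) c = sg c * ((if c \<in> anc j (startn tj) then 1 else 0) - (if c \<in> anc k (startn tk) then 1 else 0))"
proof -
  have l: "link_edge cs r j k" using assms unfolding link_edge_def by blast
  have jk: "j < d" "k < d" using link_lt[OF l] by auto
  have ne: "j \<noteq> k" using no_loop l by blast
  have lkj: "lk r j = tj" and lkk: "lk r k = tk" using assms(2) ne by (simp_all add: lk_def)
  have E: "anc j (endn tj) = anc k (endn tk)"
    using link_par[OF l]
  proof
    assume h: "pe j = r \<and> pv j = k \<and> dist j = Suc (dist k)"
    have "tp j = endn tj" using h lkj unfolding tp_def by simp
    moreover have "Gs j = anc k (endn tk)" using h lkk unfolding Gs_def hang_def by simp
    ultimately show ?thesis using anc_top[of j] by simp
  next
    assume h: "pe k = r \<and> pv k = j \<and> dist k = Suc (dist j)"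
    have "tp k = endn tk" using h lkk unfolding tp_def by simp
    moreover have "Gs k = anc j (endn tj)" using h lkj unfolding Gs_def hang_def by simp
    ultimately show ?thesis using anc_top[of k] by simp
  qed
  have "constr_row d (cs!r) c = term_coef d j tj c - term_coef d k tk c" using assms(2) by simp
  then show ?thesis using term_rep[OF jk(1), of tj c] term_rep[OF jk(2), of tk c] E
    by (simp add: algebra_simps)
qed

definition Urow :: "nat \<Rightarrow> nat set" where
  "Urow r = (case cs!r of LowerBound j t L \<Rightarrow> anc j (endn t) | UpperBound j t U \<Rightarrow> anc j (startn t)
     | KHot J s t K \<Rightarrow> KS J s t 1 | Link j tj k tk \<Rightarrow> anc j (startn tj))"

definition Wrow :: "nat \<Rightarrow> nat set" where
  "Wrow r = (case cs!r of LowerBound j t L \<Rightarrow> anc j (startn t) | UpperBound j t U \<Rightarrow> anc j (endn t)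
     | KHot J s t K \<Rightarrow> KS J s t (-1) | Link j tj k tk \<Rightarrow> anc k (startn tk))"

lemma KS_Fam: assumes "r < length cs" "cs!r = KHot J s t K" shows "KS J s t v \<in> Fam"
proof (cases "{j\<in>J. s j = v} = {}")
  case True then show ?thesis unfolding KS_def Fam_def by simp
next
  case False
  have "cs!r \<in> set cs" using assms(1) by simp
  then have wfc: "J \<subseteq> {..<d}" using wf assms(2) by fastforce
  then have "finite {j\<in>J. s j = v}" using finite_subset by (metis (no_types, lifting) finite_lessThan mem_Collect_eq subset_eq)
  then have "Max {j\<in>J. s j = v} \<in> {j\<in>J. s j = v}" using False by (rule Max_in)
  then have "Max {j\<in>J. s j = v} < d" using wfc by auto
  then show ?thesis using False unfolding KS_def Fam_def by auto
qed

lemma rep: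
  assumes "r < length cs"
  shows "constr_row d (cs!r) c = sg c * ((if c \<in> Urow r then 1 else 0) - (if c \<in> Wrow r then 1 else 0))
     \<and> Urow r \<in> Fam \<and> Wrow r \<in> Fam"
proof -
  have "cs!r \<in> set cs" using assms by simp
  then have w: "wf_constr d (cs!r)" using wf by blast
  show ?thesis
  proof (cases "cs!r")
    case (LowerBound j t L)
    then show ?thesis using term_rep[of j t c] w unfolding Urow_def Wrow_def Fam_def
      by (auto simp: algebra_simps)
  next
    case (UpperBound j t U)
    then show ?thesis using term_rep[of j t c] w unfolding Urow_def Wrow_def Fam_def
      by (auto simp: algebra_simps)
  next
    case (KHot J s t K)
    then show ?thesis using khot_row[OF assms KHot] KS_Fam[OF assms KHot] unfolding Urow_def Wrow_def by simp
  next
    case (Link j tj k tk)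
    then show ?thesis using link_row[OF assms Link] w unfolding Urow_def Wrow_def Fam_def by auto
  qed
qed

lemma sg_range: "sg c \<in> {-1, 1}" unfolding sg_def by auto

end

lemma pick_lt: assumes "i < card {a. a < m \<and> a \<in> I}" shows "pick I i < m"
proof -
  have "pick I i = pick {a. a < m \<and> a \<in> I} i" by (rule pick_reduce_set[OF assms])
  moreover have "card {a. a < m \<and> a \<in> I} = card {a \<in> {a. a < m \<and> a \<in> I}. True}" by simp
  moreover have "pick {a. a < m \<and> a \<in> I} i \<in> {a. a < m \<and> a \<in> I}"
    by (rule pick_in_set_le) (use assms in simp)
  ultimately show ?thesis by simp
qed

lemma sub_det:
  fixes A :: "int mat"
  assumes A: "A = mat m n (\<lambda>(r,c). \<sigma> c * ((if c \<in> U r then 1 else 0) - (if c \<in> W r then 1 else 0)))"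
    and sig: "\<forall>c<n. \<sigma> c \<in> {-1,1}" and gf: "goodfam n h F" and UW: "\<forall>r<m. U r \<in> F \<and> W r \<in> F"
    and sq: "dim_row (submatrix A I J) = dim_col (submatrix A I J)"
  shows "det (submatrix A I J) \<in> {-1,0,1}"
proof -
  define k where "k = card {i. i < m \<and> i \<in> I}"
  have dA: "dim_row A = m" "dim_col A = n" using A by auto
  have kk: "card {j. j < n \<and> j \<in> J} = k" using sq dA unfolding dim_submatrix k_def by simp
  have pI: "i < k \<Longrightarrow> pick I i < m" for i using pick_lt unfolding k_def by blast
  have pJ: "j < k \<Longrightarrow> pick J j < n" for j using pick_lt[of j n J] kk by simp
  have eq: "submatrix A I J = NM k (\<lambda>c. \<sigma> (pick J c)) (\<lambda>r. {c. pick J c \<in> U (pick I r)}) (\<lambda>r. {c. pick J c \<in> W (pick I r)})"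
  proof (rule eq_matI)
    fix i j assume "i < dim_row (NM k (\<lambda>c. \<sigma> (pick J c)) (\<lambda>r. {c. pick J c \<in> U (pick I r)}) (\<lambda>r. {c. pick J c \<in> W (pick I r)}))"
      "j < dim_col (NM k (\<lambda>c. \<sigma> (pick J c)) (\<lambda>r. {c. pick J c \<in> U (pick I r)}) (\<lambda>r. {c. pick J c \<in> W (pick I r)}))"
    then have ij: "i < k" "j < k" by (auto simp: NM_def)
    have "submatrix A I J $$ (i,j) = A $$ (pick I i, pick J j)"
      by (rule submatrix_index) (use ij kk in \<open>simp_all add: dA k_def\<close>)
    then show "submatrix A I J $$ (i,j) = NM k (\<lambda>c. \<sigma> (pick J c)) (\<lambda>r. {c. pick J c \<in> U (pick I r)}) (\<lambda>r. {c. pick J c \<in> W (pick I r)}) $$ (i,j)"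
      using ij pI pJ by (simp add: A NM_index)
  qed (auto simp: dim_submatrix dA k_def kk NM_def)
  have gf2: "goodfam k (\<lambda>c. h (pick J c)) ((\<lambda>X. {c. pick J c \<in> X}) ` F)"
    unfolding goodfam_def
  proof (intro ballI allI impI)
    fix A' B' e f
    assume A': "A' \<in> (\<lambda>X. {c. pick J c \<in> X}) ` F" and B': "B' \<in> (\<lambda>X. {c. pick J c \<in> X}) ` F"
      and e: "e < k" "e \<in> A'" "e \<in> B'" and f: "f < k" "h (pick J f) \<le> h (pick J e)"
    obtain X Y where XY: "X \<in> F" "Y \<in> F" "A' = {c. pick J c \<in> X}" "B' = {c. pick J c \<in> Y}"
      using A' B' by blast
    have "pick J e \<in> X" "pick J e \<in> Y" using e XY by auto
    then have "pick J f \<in> X \<longleftrightarrow> pick J f \<in> Y"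
      using gf[unfolded goodfam_def, rule_format, OF XY(1) XY(2) pJ[OF e(1)] _ _ pJ[OF f(1)] f(2)] by blast
    then show "f \<in> A' \<longleftrightarrow> f \<in> B'" using XY by blast
  qed
  have "det (NM k (\<lambda>c. \<sigma> (pick J c)) (\<lambda>r. {c. pick J c \<in> U (pick I r)}) (\<lambda>r. {c. pick J c \<in> W (pick I r)})) \<in> S1"
    by (rule main_det[OF _ gf2]) (use sig UW pI pJ in auto)
  then show ?thesis using eq by simp
qed

theorem mainTheorem1:
  fixes d :: nat and cs :: "recourse_constr list"
  assumes "d \<ge> 1"
    and "\<forall>con\<in>set cs. wf_constr d con"
    and "assumption_A1 cs"
    and "assumption_A2 cs"
    and "assumption_A3 cs"
  shows "totally_unimodular (constraint_matrix d cs)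
       \<and> (\<forall>i<dim_row (constraint_matrix d cs). \<forall>c<dim_col (constraint_matrix d cs).
            constraint_matrix d cs $$ (i, c) \<in> {-1, 0, 1})
       \<and> (\<forall>I J. dim_row (submatrix (constraint_matrix d cs) I J)
                 = dim_col (submatrix (constraint_matrix d cs) I J) \<longrightarrow>
               det (submatrix (constraint_matrix d cs) I J) \<in> {-1, 0, 1})"
proof -
  interpret RP d cs using assms by unfold_locales
  have CM: "constraint_matrix d cs = mat (length cs) (2*d)
     (\<lambda>(r,c). sg c * ((if c \<in> Urow r then 1 else 0) - (if c \<in> Wrow r then 1 else 0)))"
    by (rule eq_matI) (auto simp: constraint_matrix_def rep)
  have TU: "\<forall>I J. dim_row (submatrix (constraint_matrix d cs) I J)
                 = dim_col (submatrix (constraint_matrix d cs) I J) \<longrightarrow>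
               det (submatrix (constraint_matrix d cs) I J) \<in> {-1, 0, 1}"
  proof (intro allI impI)
    fix I J
    assume sq: "dim_row (submatrix (constraint_matrix d cs) I J) = dim_col (submatrix (constraint_matrix d cs) I J)"
    have sig: "\<forall>c<2*d. sg c \<in> {-1,1}" using sg_range by blast
    have UW: "\<forall>r<length cs. Urow r \<in> Fam \<and> Wrow r \<in> Fam" using rep by blast
    show "det (submatrix (constraint_matrix d cs) I J) \<in> {-1, 0, 1}"
      using sub_det[OF CM sig good UW sq] .

  qed
  have E: "\<forall>i<dim_row (constraint_matrix d cs). \<forall>c<dim_col (constraint_matrix d cs).
            constraint_matrix d cs $$ (i, c) \<in> {-1, 0, 1}"
  proof (intro allI impI)
    fix i c assume "i < dim_row (constraint_matrix d cs)" "c < dim_col (constraint_matrix d cs)"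
    then have ic: "i < length cs" "c < 2*d" by (auto simp: constraint_matrix_def)
    have "constraint_matrix d cs $$ (i,c) = sg c * ((if c \<in> Urow i then 1 else 0) - (if c \<in> Wrow i then 1 else 0))"
      using ic by (simp add: CM)
    then show "constraint_matrix d cs $$ (i, c) \<in> {-1, 0, 1}" using sg_range[of c] by auto
  qed
  show ?thesis using TU E unfolding totally_unimodular_def by blast
qed

end
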